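(* Consider the constant-altitude cruise minimum-fuel optimal control problem $$\min_{v(\cdot)\in[v_{\min},v_{\max}],\ \chi(\cdot),\ t_f}\ \mathcal J:=-m(t_f)$$ subject to $$\frac{dx}{dt}=v\cos\chi+W_x(x,y)=:F_x,\quad \frac{dy}{dt}=v\sin\chi+W_y(x,y)=:F_y,\quad \frac{dm}{dt}=-D(m,v)\,C_s(v)=:F_m,$$ with $x(0),y(0),m(0)$ and $x(t_f),y(t_f)$ prescribed and $t_f$ free, where $W_x,W_y$ are wind components, $D>0$ is the drag and $C_s>0$ the specific fuel consumption. Let $\mathcal H=\lambda_xF_x+\lambda_yF_y+\lambda_mF_m$ be the Hamiltonian, with costates satisfying $\frac{d\lambda}{dt}=-\frac{\partial\mathcal H}{\partial X}$ ($X=(x,y,m)$), $\lambda_m(t_f)=-1$, $\mathcal H(t)\equiv 0$ on $[0,t_f]$, and the heading satisfying $\tan\chi(t)=\lambda_y/\lambda_x$. Assume: (i) $C_s(v)>0$ is non-decreasing in $v$ and $D(m,v)>0$ is non-decreasing in both $v$ and $m$; (ii) $F_{m,vv}:=\frac{\partial^2F_m}{\partial v^2}<0$; (iii) for each $t\in[0,t_f]$ the first-order condition $\frac{\partial\mathcal H}{\partial v}(t)=0$ can be written as $G(m(t),v^*(t),W_x,W_y,\bar h)=0$ ($\bar h$ the cruise altitude), this equation implicitly defines a unique mapping $v^*(t)=f(m(t),W_x,W_y,\bar h)$, and the resulting control satisfies $v_{\min}<v^*(t)<v_{\max}$ for all $t\in[0,t_f]$. Then the minimizer $v^*(t)$ of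 the Hamiltonian satisfies $v_{\min}<v^*(t)<v_{\max}$ for all $t\in[0,t_f]$, and the Hamiltonian is strictly convex in $v$ at $v^*(t)$: $\frac{\partial^2\mathcal H}{\partial v^2}(t)>0$ at every $t$ where $\frac{\partial\mathcal H}{\partial v}(t)=0$, so the stationary point is a local minimum of $\mathcal H$ in $v$.
   Context: Point-mass cruise at constant altitude $\bar h$ with airspeed $v$ treated as a control (quasi-steady flight, thrust equal to drag) and heading angle $\chi$ as a second control. *)

theory Defs
  imports "HOL-Analysis.Analysis"
begin

definition Fm :: "(real \<Rightarrow> real \<Rightarrow> real) \<Rightarrow> (real \<Rightarrow> real) \<Rightarrow> real \<Rightarrow> real \<Rightarrow> real" where
  "Fm D Cs m v = - (D m v * Cs v)"

definition Ham ::
  "(real \<Rightarrow> real \<Rightarrow> real) \<Rightarrow> (real \<Rightarrow> real \<Rightarrow> real) \<Rightarrow> (real \<Rightarrow> real \<Rightarrow> real) \<Rightarrow> (real \<Rightarrow> real)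
   \<Rightarrow> real \<Rightarrow> real \<Rightarrow> real \<Rightarrow> real \<Rightarrow> real \<Rightarrow> real \<Rightarrow> real \<Rightarrow> real \<Rightarrow> real" where
  "Ham Wx Wy D Cs lx ly lm x y m v chi =
     lx * (v * cos chi + Wx x y) + ly * (v * sin chi + Wy x y) + lm * Fm D Cs m v"

end

theory Submission
  imports Defs
begin


lemma lin_neg:
  fixes lm a :: "real \<Rightarrow> real"
  assumes "0 < tf" "continuous_on {0..tf} a"
    "\<And>t. t \<in> {0..tf} \<Longrightarrow> (lm has_real_derivative lm t * a t) (at t within {0..tf})"
    "lm tf = -1"
  shows "\<forall>t\<in>{0..tf}. lm t < 0"
proof -
  define A where "A x = integral {0..x} a" for x
  have dA: "(A has_real_derivative a t) (at t within {0..tf})" if "t \<in> {0..tf}" for t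
    unfolding A_def using integral_has_real_derivative[OF assms(2) that] .
  have "((\<lambda>t. lm t * exp (- A t)) has_real_derivative 0) (at t within {0..tf})" if "t \<in> {0..tf}" for t
  proof -
    have e: "((\<lambda>t. exp (- A t)) has_real_derivative exp (- A t) * (- a t)) (at t within {0..tf})"
      by (rule DERIV_chain'[OF DERIV_minus[OF dA[OF that]] DERIV_exp])
    have "((\<lambda>t. lm t * exp (- A t)) has_real_derivative
        (lm t * a t) * exp (- A t) + (exp (- A t) * (- a t)) * lm t) (at t within {0..tf})"
      by (rule DERIV_mult[OF assms(3)[OF that] e])
    then show ?thesis by (simp add: algebra_simps)
  qed
  then obtain c where c: "\<forall>t\<in>{0..tf}. lm t * exp (- A t) = c"
    using has_field_derivative_zero_constant[of "{0..tf}" "\<lambda>t. lm t * exp (- A t)"]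
    by (simp add: convex_real_interval(5)) blast
  have "c < 0" using c[rule_format, of tf] assms(1,4) by auto
  show ?thesis
  proof
    fix t assume t: "t \<in> {0..tf}"
    have "lm t * exp (- A t) < 0" using c t \<open>c < 0\<close> by auto
    then show "lm t < 0" by (simp add: mult_less_0_iff)
  qed
qed

theorem theorem2:
  fixes Wx Wy :: "real \<Rightarrow> real \<Rightarrow> real"
    and Wxx Wxy Wyx Wyy :: "real \<Rightarrow> real \<Rightarrow> real"
    and D Dm Fmv Fmvv :: "real \<Rightarrow> real \<Rightarrow> real"
    and Cs :: "real \<Rightarrow> real"
    and x y m lx ly lm v chi :: "real \<Rightarrow> real"
    and tf vmin vmax hbar x0 y0 m0 xf yf :: real
    and G :: "real \<Rightarrow> real \<Rightarrow> real \<Rightarrow> real \<Rightarrow> real \<Rightarrow> real"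
    and f :: "real \<Rightarrow> real \<Rightarrow> real \<Rightarrow> real \<Rightarrow> real"
  assumes tf_pos: "0 < tf"
    \<comment> \<open>partial derivatives of the wind field\<close>
    and Wx_x: "\<And>a b. ((\<lambda>a'. Wx a' b) has_real_derivative Wxx a b) (at a)"
    and Wx_y: "\<And>a b. ((\<lambda>b'. Wx a b') has_real_derivative Wxy a b) (at b)"
    and Wy_x: "\<And>a b. ((\<lambda>a'. Wy a' b) has_real_derivative Wyx a b) (at a)"
    and Wy_y: "\<And>a b. ((\<lambda>b'. Wy a b') has_real_derivative Wyy a b) (at b)"
    \<comment> \<open>partial derivative of the drag w.r.t. the mass (continuous)\<close>
    and D_m: "\<And>mm w. ((\<lambda>q. D q w) has_real_derivative Dm mm w) (at mm)"
    and Dm_cont: "continuous_on UNIV (\<lambda>p. Dm (fst p) (snd p))"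
    and Cs_cont: "continuous_on UNIV Cs"
    \<comment> \<open>first and second partial derivatives of F_m w.r.t. v\<close>
    and Fm_v: "\<And>mm w. ((\<lambda>w'. Fm D Cs mm w') has_real_derivative Fmv mm w) (at w)"
    and Fmv_v: "\<And>mm w. ((\<lambda>w'. Fmv mm w') has_real_derivative Fmvv mm w) (at w)"
    \<comment> \<open>(i)\<close>
    and Cs_pos: "\<And>w. Cs w > 0"
    and Cs_mono: "\<And>w1 w2. w1 \<le> w2 \<Longrightarrow> Cs w1 \<le> Cs w2"
    and D_pos: "\<And>mm w. D mm w > 0"
    and D_mono_v: "\<And>mm w1 w2. w1 \<le> w2 \<Longrightarrow> D mm w1 \<le> D mm w2"
    and D_mono_m: "\<And>m1 m2 w. m1 \<le> m2 \<Longrightarrow> D m1 w \<le> D m2 w"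
    \<comment> \<open>(ii)\<close>
    and Fmvv_neg: "\<And>mm w. Fmvv mm w < 0"
    \<comment> \<open>dynamics on [0,tf]\<close>
    and v_cont: "continuous_on {0..tf} v"
    and x_ode: "\<And>t. t \<in> {0..tf} \<Longrightarrow>
       (x has_real_derivative (v t * cos (chi t) + Wx (x t) (y t))) (at t within {0..tf})"
    and y_ode: "\<And>t. t \<in> {0..tf} \<Longrightarrow>
       (y has_real_derivative (v t * sin (chi t) + Wy (x t) (y t))) (at t within {0..tf})"
    and m_ode: "\<And>t. t \<in> {0..tf} \<Longrightarrow>
       (m has_real_derivative Fm D Cs (m t) (v t)) (at t within {0..tf})"
    and bc: "x 0 = x0" "y 0 = y0" "m 0 = m0" "x tf = xf" "y tf = yf"
    \<comment> \<open>costate equations  d lambda/dt = - dH/dX\<close>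
    and lx_ode: "\<And>t. t \<in> {0..tf} \<Longrightarrow>
       (lx has_real_derivative
          - (lx t * Wxx (x t) (y t) + ly t * Wyx (x t) (y t))) (at t within {0..tf})"
    and ly_ode: "\<And>t. t \<in> {0..tf} \<Longrightarrow>
       (ly has_real_derivative
          - (lx t * Wxy (x t) (y t) + ly t * Wyy (x t) (y t))) (at t within {0..tf})"
    and lm_ode: "\<And>t. t \<in> {0..tf} \<Longrightarrow>
       (lm has_real_derivative
          - (lm t * (- (Dm (m t) (v t) * Cs (v t))))) (at t within {0..tf})"
    and lm_tf: "lm tf = -1"
    and H_zero: "\<And>t. t \<in> {0..tf} \<Longrightarrow>
       Ham Wx Wy D Cs (lx t) (ly t) (lm t) (x t) (y t) (m t) (v t) (chi t) = 0"
    and heading: "\<And>t. t \<in> {0..tf} \<Longrightarrow> tan (chi t) = ly t / lx t"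
    \<comment> \<open>(iii)\<close>
    and G_repr: "\<And>t w. t \<in> {0..tf} \<Longrightarrow>
       (deriv (\<lambda>w'. Ham Wx Wy D Cs (lx t) (ly t) (lm t) (x t) (y t) (m t) w' (chi t)) w = 0
        \<longleftrightarrow> G (m t) w (Wx (x t) (y t)) (Wy (x t) (y t)) hbar = 0)"
    and f_sol: "\<And>mm wx wy. G mm (f mm wx wy hbar) wx wy hbar = 0"
    and f_unique: "\<And>mm w wx wy. G mm w wx wy hbar = 0 \<Longrightarrow> w = f mm wx wy hbar"
    and v_eq_f: "\<And>t. t \<in> {0..tf} \<Longrightarrow> v t = f (m t) (Wx (x t) (y t)) (Wy (x t) (y t)) hbar"
    and v_bounds: "\<And>t. t \<in> {0..tf} \<Longrightarrow> vmin < v t \<and> v t < vmax"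
  shows "\<forall>t \<in> {0..tf}. vmin < v t \<and> v t < vmax \<and>
     (deriv (\<lambda>w. Ham Wx Wy D Cs (lx t) (ly t) (lm t) (x t) (y t) (m t) w (chi t)) (v t) = 0
      \<longrightarrow> deriv (deriv (\<lambda>w. Ham Wx Wy D Cs (lx t) (ly t) (lm t) (x t) (y t) (m t) w (chi t))) (v t) > 0)"
proof -
  have mcont: "continuous_on {0..tf} m"
    using m_ode by (meson DERIV_continuous continuous_on_eq_continuous_within)
  have acont: "continuous_on {0..tf} (\<lambda>t. Dm (m t) (v t) * Cs (v t))"
  proof (intro continuous_on_mult)
    have "continuous_on {0..tf} (\<lambda>t. (m t, v t))"
      by (intro continuous_on_Pair mcont v_cont)
    from continuous_on_compose2[OF Dm_cont this]
    show "continuous_on {0..tf} (\<lambda>t. Dm (m t) (v t))" by simp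
    show "continuous_on {0..tf} (\<lambda>t. Cs (v t))"
      using continuous_on_compose2[OF Cs_cont v_cont] by simp
  qed
  have lmneg: "\<forall>t\<in>{0..tf}. lm t < 0"
  proof (rule lin_neg[where lm=lm, OF tf_pos acont _ lm_tf])
    fix t assume "t \<in> {0..tf}"
    from lm_ode[OF this] show "(lm has_real_derivative lm t * (Dm (m t) (v t) * Cs (v t))) (at t within {0..tf})"
      by simp
  qed
  show ?thesis
  proof
    fix t assume t: "t \<in> {0..tf}"
    let ?H = "\<lambda>w. Ham Wx Wy D Cs (lx t) (ly t) (lm t) (x t) (y t) (m t) w (chi t)"
    have d1: "(?H has_real_derivative lx t * cos (chi t) + ly t * sin (chi t) + lm t * Fmv (m t) w) (at w)" for w
    proof -
      have "(?H has_real_derivative lx t * (1 * cos (chi t) + 0) + ly t * (1 * sin (chi t) + 0) + lm t * Fmv (m t) w) (at w)"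
        unfolding Ham_def
        by (intro DERIV_add DERIV_cmult DERIV_cmult_right DERIV_ident DERIV_const Fm_v)
      then show ?thesis by simp
    qed
    have e1: "deriv ?H = (\<lambda>w. lx t * cos (chi t) + ly t * sin (chi t) + lm t * Fmv (m t) w)"
      using d1 DERIV_imp_deriv by blast
    have d2: "((\<lambda>w. lx t * cos (chi t) + ly t * sin (chi t) + lm t * Fmv (m t) w) has_real_derivative lm t * Fmvv (m t) w) (at w)" for w
    proof -
      have "((\<lambda>w. lx t * cos (chi t) + ly t * sin (chi t) + lm t * Fmv (m t) w) has_real_derivative 0 + lm t * Fmvv (m t) w) (at w)"
        by (intro DERIV_add DERIV_cmult DERIV_const Fmv_v)
      then show ?thesis by simp
    qed
    have "deriv (deriv ?H) (v t) = lm t * Fmvv (m t) (v t)"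
      unfolding e1 using d2 DERIV_imp_deriv by blast
    moreover have "lm t * Fmvv (m t) (v t) > 0"
      using lmneg t Fmvv_neg by (simp add: mult_neg_neg)
    ultimately show "vmin < v t \<and> v t < vmax \<and> (deriv ?H (v t) = 0 \<longrightarrow> deriv (deriv ?H) (v t) > 0)"
      using v_bounds[OF t] by simp
  qed
qed

end
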